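(* With $T_{2,n,q}$ as defined below, as $n\to\infty$, $$|T_{2,n,q}|=\begin{cases}O(n^{-1}) & q\in[-1,0),\\ O(n^{-1}\log n) & q=0,\\ O(n^{q-1}) & q\in(0,1).\end{cases}$$
   Context: For $q\in[-1,1)$ and $k\ge1$: $H(k,q):=\frac{k}{2q-1}\Big(\frac{\Gamma(k+2q)}{\Gamma(k+1)\Gamma(2q)}-1\Big)$ if $q\ne\frac12$ (where $\frac{\Gamma(k+2q)}{\Gamma(2q)}$ means the Pochhammer product $2q(2q+1)\cdots(2q+k-1)$), and $H(k,\tfrac12):=k\sum_{j=1}^k\frac1j$. Also $I(k,q):=\frac{\Gamma(k+1)}{\Gamma(k+q)\Gamma(1-q)}$, with the convention $1/\Gamma(0)=0$. Define $$T_{2,n,q}:=\int_0^1\frac{u^{n+q}(1-u)^{-q}}{1+u}\,du\ \sum_{k=1}^n(-1)^{n-k}\frac{H(k,q)I(k,q)}{k^2}.$$ *)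

theory Defs
  imports "HOL-Analysis.Analysis" "HOL-Library.Landau_Symbols"
begin

text \<open>H(k,q). For q \<noteq> 1/2, Gamma(k+2q)/(Gamma(k+1)Gamma(2q)) is read as the
  Pochhammer product (2q)_k / k!.\<close>
definition Hkq :: "nat \<Rightarrow> real \<Rightarrow> real" where
  "Hkq k q = (if q = 1/2 then real k * (\<Sum>j=1..k. 1 / real j)
              else real k / (2*q - 1) * (pochhammer (2*q) k / fact k - 1))"

text \<open>I(k,q) = Gamma(k+1) / (Gamma(k+q) Gamma(1-q)), with 1/Gamma(0) = 0
  (rGamma is the reciprocal Gamma function, rGamma 0 = 0).\<close>
definition Ikq :: "nat \<Rightarrow> real \<Rightarrow> real" where
  "Ikq k q = fact k * rGamma (real k + q) * rGamma (1 - q)"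

definition T2 :: "nat \<Rightarrow> real \<Rightarrow> real" where
  "T2 n q = integral {0..1} (\<lambda>u. u powr (real n + q) * (1 - u) powr (- q) / (1 + u))
            * (\<Sum>k=1..n. (-1) ^ (n - k) * Hkq k q * Ikq k q / (real k)^2)"

end

theory Submission
  imports Defs "HOL-Real_Asymp.Real_Asymp"
begin

lemma convergent_bigo1:
  fixes f :: "nat \<Rightarrow> real"
  assumes "f \<longlonglongrightarrow> L" shows "f \<in> O(\<lambda>_. 1)"
  using assms by (intro bigoI_tendsto[where c = L]) auto

lemma bigo_cmult:
  fixes f g :: "nat \<Rightarrow> real"
  assumes "f \<in> O(g)" shows "(\<lambda>x. c * f x) \<in> O(g)"
  by (cases "c = 0") (simp_all add: assms)

lemma fact_poch_bigo:
  fixes z :: real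
  shows "(\<lambda>n. fact n / pochhammer z n) \<in> O(\<lambda>n. real n powr (1 - z))"
proof -
  have e: "eventually (\<lambda>n. Gamma_series z n * ((z + real n) / real n powr z) = fact n / pochhammer z n) at_top"
    using eventually_gt_at_top[of "nat (ceiling (-z)) + 1"]
  proof eventually_elim
    case (elim n)
    hence n0: "n > 0" and nz: "z + real n \<noteq> 0" by linarith+
    show ?case
    proof (cases "pochhammer z n = 0")
      case True thus ?thesis by (simp add: Gamma_series_def pochhammer_Suc)
    next
      case False
      have *: "fact n * e / (p * w) * (w/e) = fact n / p" if "e \<noteq> 0" "p \<noteq> 0" "w \<noteq> 0" for e p w :: real
        using that by (simp add: field_simps)
      show ?thesis using n0 nz False *[of "exp (z * ln (real n))" "pochhammer z n" "z + real n"]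
        by (simp add: Gamma_series_def pochhammer_Suc powr_def)
    qed
  qed
  have "(\<lambda>n. Gamma_series z n * ((z + real n) / real n powr z)) \<in> O(\<lambda>n. 1 * real n powr (1 - z))"
    by (intro landau_o.big.mult convergent_bigo1[OF Gamma_series_LIMSEQ]) real_asymp
  thus ?thesis using landau_o.big.in_cong[OF e] by simp
qed

lemma poch_fact_bigo:
  fixes z :: real
  shows "(\<lambda>n. pochhammer z n / fact n) \<in> O(\<lambda>n. real n powr (z - 1))"
proof -
  have e: "eventually (\<lambda>n. rGamma_series z n * (real n powr z / (z + real n)) = pochhammer z n / fact n) at_top"
    using eventually_gt_at_top[of "nat (ceiling (-z)) + 1"]
  proof eventually_elim
    case (elim n)
    hence n0: "n > 0" and nz: "z + real n \<noteq> 0" by linarith+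
    have *: "p * w / (fact n * e) * (e/w) = p / fact n" if "e \<noteq> 0" "w \<noteq> 0" for e p w :: real
        using that by (simp add: field_simps)
    show ?case using n0 nz *[of "exp (z * ln (real n))" "z + real n" "pochhammer z n"]
        by (simp add: rGamma_series_def pochhammer_Suc powr_def)
  qed
  have "(\<lambda>n. rGamma_series z n * (real n powr z / (z + real n))) \<in> O(\<lambda>n. 1 * real n powr (z - 1))"
    by (intro landau_o.big.mult convergent_bigo1[OF rGamma_series_LIMSEQ]) real_asymp
  thus ?thesis using landau_o.big.in_cong[OF e] by simp
qed

definition bb :: "real \<Rightarrow> nat \<Rightarrow> real" where "bb q k = Ikq k q / real k"
lemma rGamma_nat1: "rGamma (1 + real n) = inverse (fact n)"
  using Gamma_fact[of n, where 'a=real] by (simp add: rGamma_inverse_Gamma)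
definition aa :: "real \<Rightarrow> nat \<Rightarrow> real" where "aa q k = Hkq k q * Ikq k q / (real k)^2"
definition cc :: "real \<Rightarrow> nat \<Rightarrow> real" where "cc q k = Hkq k q / real k"
lemma aa_bc: "k \<ge> 1 \<Longrightarrow> aa q k = bb q k * cc q k"
  by (simp add: aa_def bb_def cc_def power2_eq_square)

lemma bb_step: assumes "k \<ge> 1" shows "bb q k = bb q (Suc k) * (real k + q) / real k"
proof -
  have r: "rGamma (real k + q) = (real k + q) * rGamma (real (Suc k) + q)"
    using rGamma_plus1[of "real k + q"] by (simp add: add_ac)
  have f: "fact (Suc k) = real (Suc k) * fact k" by simp
  have *: "F * ((x + q) * G) * R / x = (s * F) * G * R / s * (x + q) / x" if "s \<noteq> 0" for F G R s x :: real
    using that by simp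
  show ?thesis unfolding bb_def Ikq_def r f
    by (rule *) simp
qed

definition PP :: "real \<Rightarrow> nat \<Rightarrow> real" where "PP q k = pochhammer (2*q) k / fact k"

lemma cc_alt: assumes "k \<ge> 1" "q \<noteq> 1/2" shows "cc q k = (PP q k - 1) / (2*q - 1)"
  using assms by (simp add: cc_def Hkq_def PP_def)

lemma cc_half: "cc (1/2) k = (if k = 0 then 0 else harm k)"
  by (simp add: cc_def Hkq_def harm_def inverse_eq_divide)

lemma PP_Suc: "PP q (Suc k) = PP q k * (2*q + real k) / real (Suc k)"
proof -
  have p: "pochhammer (2*q) (Suc k) = pochhammer (2*q) k * (2*q + real k)"
    by (simp add: pochhammer_rec')
  have *: "A * w / (s * F) = A / F * w / s" for A w s F :: real by simp
  show ?thesis unfolding PP_def p fact_Suc of_nat_mult by (rule *)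
qed

lemma cc_step: assumes "k \<ge> 1" shows "cc q (Suc k) = cc q k + PP q k / real (Suc k)"
proof (cases "q = 1/2")
  case True
  have p: "PP (1/2) k = 1" by (simp add: PP_def pochhammer_fact[symmetric])
  show ?thesis using assms unfolding True by (simp add: cc_half p harm_Suc inverse_eq_divide)
next
  case False
  hence d: "2*q - 1 \<noteq> 0" by simp
  have *: "(P * (2*q + x) / (1+x) - 1) / (2*q - 1) = (P - 1) / (2*q - 1) + P / (1+x)"
    if "x \<ge> 0" for P x :: real
    using that d by (simp add: field_simps)
  show ?thesis using assms False
    using *[of "real k" "PP q k"] by (simp add: cc_alt PP_Suc)
qed

lemma aa_diff: assumes "k \<ge> 1"
  shows "aa q (Suc k) - aa q k = bb q (Suc k) * (PP q k / real (Suc k) - q * cc q k / real k)"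
proof -
  have *: "B * (c + P / s) - B * (x + q) / x * c = B * (P / s - q * c / x)" if "x \<noteq> 0" for B c P s x :: real
    using that by (simp add: field_simps)
  have "aa q (Suc k) - aa q k = bb q (Suc k) * cc q (Suc k) - bb q k * cc q k"
    using assms by (simp add: aa_bc)
  also have "\<dots> = bb q (Suc k) * (cc q k + PP q k / real (Suc k))
                  - bb q (Suc k) * (real k + q) / real k * cc q k"
    using assms by (simp only: cc_step bb_step[OF assms])
  also have "\<dots> = bb q (Suc k) * (PP q k / real (Suc k) - q * cc q k / real k)"
    using assms by (intro *) simp
  finally show ?thesis .
qed
lemma alt_sum_bound:
  fixes a :: "nat \<Rightarrow> real"
  shows "\<bar>\<Sum>k=1..n. (-1)^(n-k) * a k\<bar> \<le> \<bar>a 1\<bar> + (\<Sum>k=1..<n. \<bar>a (Suc k) - a k\<bar>)"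
proof (induction n rule: less_induct)
  case (less n)
  define V where "V m = (\<Sum>k=1..<m. \<bar>a (Suc k) - a k\<bar>)" for m
  show ?case
  proof (cases "n \<ge> 2")
    case False
    hence "n = 0 \<or> n = 1" by auto
    thus ?thesis by auto
  next
    case True
    then obtain m where m: "n = Suc (Suc m)" by (metis add_2_eq_Suc le_Suc_ex)
    have s: "(\<Sum>k=1..n. (-1)^(n-k) * a k) = a n - a (Suc m) + (\<Sum>k=1..m. (-1)^(m-k) * a k)"
    proof -
      have "(\<Sum>k=1..n. (-1)^(n-k) * a k) = (\<Sum>k=1..m. (-1)^(n-k) * a k) + (-1)^(n - Suc m) * a (Suc m) + a n"
        unfolding m by (simp add: sum.cl_ivl_Suc)
      also have "(\<Sum>k=1..m. (-1)^(n-k) * a k) = (\<Sum>k=1..m. (-1)^(m-k) * a k)"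
      proof (rule sum.cong)
        fix k assume "k \<in> {1..m}"
        hence "n - k = Suc (Suc (m - k))" using m by auto
        thus "(-1)^(n-k) * a k = (-1)^(m-k) * a k" by simp
      qed simp
      finally show ?thesis using m by simp
    qed
    have ih: "\<bar>\<Sum>k=1..m. (-1)^(m-k) * a k\<bar> \<le> \<bar>a 1\<bar> + V m"
      using less[of m] m unfolding V_def by simp
    have vm: "V m + \<bar>a n - a (Suc m)\<bar> \<le> V n"
    proof -
      have "V n = V (Suc m) + \<bar>a n - a (Suc m)\<bar>"
        using m unfolding V_def by (cases "m = 0") (auto simp: sum.atLeastLessThan_Suc)
      moreover have "V m \<le> V (Suc m)" unfolding V_def
        by (cases "m = 0") (auto simp: sum.atLeastLessThan_Suc)
      ultimately show ?thesis by linarith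
    qed
    have "\<bar>\<Sum>k=1..n. (-1)^(n-k) * a k\<bar> \<le> \<bar>a n - a (Suc m)\<bar> + \<bar>\<Sum>k=1..m. (-1)^(m-k) * a k\<bar>"
      unfolding s by linarith
    also have "\<dots> \<le> \<bar>a 1\<bar> + V n" using ih vm by linarith
    finally show ?thesis unfolding V_def .
  qed
qed

lemma bb_Suc_bigo:
  assumes "-1 \<le> q" "q < 1"
  shows "(\<lambda>k. bb q (Suc k)) \<in> O(\<lambda>k. real k powr (-q))"
proof (cases "q = -1")
  case True
  have e: "eventually (\<lambda>k. bb q (Suc k) = real k) at_top"
    using eventually_ge_at_top[of "1::nat"]
  proof eventually_elim
    case (elim k)
    have r1: "rGamma (real (Suc k) + q) = inverse (fact (k - 1))"
      using rGamma_nat1[of "k - 1"] elim True by (simp add: of_nat_diff)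
    have r2: "rGamma (1 - q) = 1" using rGamma_nat1[of 1] True by simp
    have f: "(fact (Suc k) :: real) = real (Suc k) * real k * fact (k - 1)"
      using elim by (cases k) auto
    show ?case unfolding bb_def Ikq_def r1 r2 f by simp
  qed
  have "(\<lambda>k. real k) \<in> O(\<lambda>k. real k powr (-q))" using True by real_asymp
  thus ?thesis using landau_o.big.in_cong[OF e] by simp
next
  case False
  hence q1: "q + 1 > 0" using assms by simp
  have e: "eventually (\<lambda>k. bb q (Suc k) = rGamma (q+1) * rGamma (1-q) * (fact k / pochhammer (q+1) k)) at_top"
  proof (intro always_eventually allI)
    fix k
    have p: "pochhammer (q+1) k > 0" using q1 by (intro pochhammer_pos)
    have r: "rGamma (q+1) = pochhammer (q+1) k * rGamma (real (Suc k) + q)"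
      using pochhammer_rGamma[of "q+1" k] by (simp add: add_ac)
    have *: "s * F * G * R / s = P * G * R * (F / P)" if "s \<noteq> 0" "P \<noteq> 0" for F s G R P :: real
      using that by simp
    show "bb q (Suc k) = rGamma (q+1) * rGamma (1-q) * (fact k / pochhammer (q+1) k)"
      unfolding bb_def Ikq_def r fact_Suc of_nat_mult using p by (intro *) auto
  qed
  have "(\<lambda>k. rGamma (q+1) * rGamma (1-q) * (fact k / pochhammer (q+1) k)) \<in> O(\<lambda>k. real k powr (1 - (q+1)))"
    using bigo_cmult[OF fact_poch_bigo[of "q+1"], of "rGamma (q+1) * rGamma (1-q)"] by simp
  thus ?thesis using landau_o.big.in_cong[OF e] by simp
qed

lemma Beta_bigo:
  assumes "-1 \<le> q" "q < 1"
  shows "(\<lambda>n. Beta (real n + q + 1) (1 - q)) \<in> O(\<lambda>n. real n powr (q - 1))"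
proof -
  have rg: "rGamma (real n + q + 1 + (1 - q)) = inverse (fact (Suc n))" for n
    using rGamma_nat1[of "Suc n"] by (simp add: add_ac)
  show ?thesis
  proof (cases "q = -1")
    case True
    have e: "eventually (\<lambda>n. Beta (real n + q + 1) (1 - q) = 1 / (real n * (real n + 1))) at_top"
      using eventually_ge_at_top[of "1::nat"]
    proof eventually_elim
      case (elim n)
      have g1: "Gamma (real n + q + 1) = fact (n - 1)"
        using Gamma_fact[of "n - 1", where 'a=real] elim True by (simp add: of_nat_diff)
      have g2: "Gamma (1 - q) = 1" using Gamma_fact[of 1, where 'a=real] True by simp
      have f: "(fact (Suc n) :: real) = (real n + 1) * real n * fact (n - 1)"
        using elim by (cases n) (auto simp: algebra_simps)
      have *: "F * 1 * inverse ((x + 1) * x * F) = 1 / (x * (x + 1))" if "F \<noteq> 0" "x > 0" for F x :: real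
      proof -
        have "F * 1 * inverse ((x + 1) * x * F) = (F * inverse F) * inverse ((x+1)*x)"
          by (simp add: inverse_mult_distrib mult_ac)
        also have "\<dots> = 1/(x*(x+1))" using that by (simp add: divide_inverse mult_ac)
        finally show ?thesis .
      qed
      show ?case unfolding Beta_altdef rg g1 g2 f by (rule *) (use elim in auto)
    qed
    have "(\<lambda>n. 1 / (real n * (real n + 1))) \<in> O(\<lambda>n. real n powr (q - 1))" using True by real_asymp
    thus ?thesis using landau_o.big.in_cong[OF e] by simp
  next
    case False
    hence q1: "q + 1 > 0" using assms by simp
    have e: "eventually (\<lambda>n. Beta (real n + q + 1) (1 - q) =
       Gamma (q+1) * Gamma (1-q) * ((pochhammer (q+1) n / fact n) * (1 / (real n + 1)))) at_top"
    proof (intro always_eventually allI)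
      fix n
      have nn: "q + 1 \<notin> \<int>\<^sub>\<le>\<^sub>0" using q1 by (auto elim!: nonpos_Ints_cases)
      have g: "Gamma (real n + q + 1) = pochhammer (q+1) n * Gamma (q+1)"
      proof -
        have "Gamma (q+1) > 0" using q1 by simp
        thus ?thesis using pochhammer_Gamma[OF nn, of n] by (simp add: field_simps add_ac)
      qed
      show "Beta (real n + q + 1) (1 - q) =
       Gamma (q+1) * Gamma (1-q) * ((pochhammer (q+1) n / fact n) * (1 / (real n + 1)))"
        unfolding Beta_altdef rg g fact_Suc by (simp add: field_simps)
    qed
    have "(\<lambda>n. (pochhammer (q+1) n / fact n) * (1 / (real n + 1))) \<in> O(\<lambda>n. real n powr (q + 1 - 1) * (1 / (real n + 1)))"
      by (intro landau_o.big.mult poch_fact_bigo) simp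
    also have "(\<lambda>n. real n powr (q + 1 - 1) * (1 / (real n + 1))) \<in> O(\<lambda>n. real n powr (q - 1))"
      by real_asymp
    finally have "(\<lambda>n. Gamma (q+1) * Gamma (1-q) * ((pochhammer (q+1) n / fact n) * (1 / (real n + 1)))) \<in> O(\<lambda>n. real n powr (q - 1))"
      by (rule bigo_cmult)
    thus ?thesis using landau_o.big.in_cong[OF e] by simp
  qed
qed

lemma J_bound:
  assumes "-1 \<le> q" "q < 1" "n \<ge> 1"
  shows "\<bar>integral {0..1} (\<lambda>u. u powr (real n + q) * (1 - u) powr (- q) / (1 + u))\<bar>
         \<le> \<bar>Beta (real n + q + 1) (1 - q)\<bar>"
proof -
  define f where "f = (\<lambda>u::real. u powr (real n + q) * (1 - u) powr (- q) / (1 + u))"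
  define g where "g = (\<lambda>u::real. u powr (real n + q) * (1 - u) powr (- q))"
  have a: "real n + q + 1 > 0" using assms by simp
  have hg: "(g has_integral Beta (real n + q + 1) (1 - q)) {0..1}"
    using has_integral_Beta_real[OF a, of "1 - q"] assms unfolding g_def by simp
  have fle: "f u \<le> g u" and f0: "0 \<le> f u" if "u \<in> {0..1}" for u
  proof -
    have "0 \<le> g u" unfolding g_def by simp
    moreover have "1 \<le> 1 + u" using that by simp
    moreover have "f u = g u / (1 + u)" unfolding f_def g_def by simp
    moreover have "g u * 1 \<le> g u * (1 + u)" using calculation by (intro mult_left_mono) auto
    ultimately show "f u \<le> g u" "0 \<le> f u"
      by (simp_all add: pos_divide_le_eq)
  qed
  have B0: "0 \<le> Beta (real n + q + 1) (1 - q)"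
    using has_integral_nonneg[OF hg] unfolding g_def by simp
  show ?thesis
  proof (cases "f integrable_on {0..1}")
    case True
    have "integral {0..1} f \<le> integral {0..1} g"
      using True hg fle by (intro integral_le) auto
    moreover have "0 \<le> integral {0..1} f" using True f0 by (intro integral_nonneg)
    ultimately show ?thesis using hg unfolding f_def[symmetric] by (simp add: integral_unique)
  next
    case False
    thus ?thesis using B0 unfolding f_def[symmetric] by (simp add: not_integrable_integral)
  qed
qed

lemma J_bigo:
  assumes "-1 \<le> q" "q < 1"
  shows "(\<lambda>n. integral {0..1} (\<lambda>u. u powr (real n + q) * (1 - u) powr (- q) / (1 + u)))
           \<in> O(\<lambda>n. real n powr (q - 1))"
proof -
  have "(\<lambda>n. integral {0..1} (\<lambda>u. u powr (real n + q) * (1 - u) powr (- q) / (1 + u)))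
           \<in> O(\<lambda>n. Beta (real n + q + 1) (1 - q))"
  proof (intro landau_o.big_mono)
    show "eventually (\<lambda>n. norm (integral {0..1} (\<lambda>u. u powr (real n + q) * (1 - u) powr (- q) / (1 + u)))
          \<le> norm (Beta (real n + q + 1) (1 - q))) at_top"
      using eventually_ge_at_top[of "1::nat"]
      by eventually_elim (use J_bound[OF assms] in auto)
  qed
  also have "(\<lambda>n. Beta (real n + q + 1) (1 - q)) \<in> O(\<lambda>n. real n powr (q - 1))"
    by (rule Beta_bigo[OF assms])
  finally show ?thesis .
qed

lemma powr_step:
  assumes "0 < r" "r \<le> 1"
  shows "real (Suc n) powr (r - 1) \<le> (real (Suc n) powr r - real n powr r) / r"
proof (cases "n = 0")
  case True thus ?thesis using assms by simp
next
  case False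
  hence n0: "real n > 0" by simp
  have "\<exists>z. real n < z \<and> z < real n + 1 \<and>
      ((real n + 1) powr r - real n powr r = (real n + 1 - real n) * (r * z powr (r - 1)))"
    using n0 by (intro MVT2) (auto intro!: has_real_derivative_powr)
  then obtain z where z: "real n < z" "z < real n + 1"
    "(real n + 1) powr r - real n powr r = r * z powr (r - 1)" by auto
  have "(real n + 1) powr (r - 1) \<le> z powr (r - 1)"
    using z n0 assms by (intro powr_mono2') auto
  thus ?thesis using z assms by (simp add: field_simps add_ac)
qed

lemma powr_sum_bound:
  assumes "0 < r" "r \<le> 1"
  shows "(\<Sum>k=1..n. real k powr (r - 1)) \<le> real n powr r / r"
proof (induction n)
  case 0 thus ?case by simp
next
  case (Suc n)
  have "(\<Sum>k=1..Suc n. real k powr (r - 1)) = (\<Sum>k=1..n. real k powr (r - 1)) + real (Suc n) powr (r - 1)"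
    by simp
  also have "\<dots> \<le> real n powr r / r + (real (Suc n) powr r - real n powr r) / r"
    using Suc powr_step[OF assms, of n] by linarith
  also have "\<dots> = real (Suc n) powr r / r" using assms by (simp add: field_simps)
  finally show ?case .
qed


lemma V_bigo_1:
  fixes g :: "nat \<Rightarrow> real"
  assumes "0 < e" "\<And>k. g k \<ge> 0" "g \<in> O(\<lambda>k. real k powr (-1 - e))"
  shows "(\<lambda>n. \<Sum>k=1..<n. g k) \<in> O(\<lambda>_. 1)"
proof -
  have "summable (\<lambda>k. norm (real k powr (-1 - e)))"
    using assms(1) by (simp add: summable_real_powr_iff)
  hence sg: "summable g" using assms(3) by (rule summable_comparison_test_bigo)
  show ?thesis
  proof (rule landau_o.bigI[of "suminf g + 1"])
    show "suminf g + 1 > 0" using suminf_nonneg[OF sg assms(2)] by simp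
    show "eventually (\<lambda>n. norm (\<Sum>k=1..<n. g k) \<le> (suminf g + 1) * norm (1::real)) at_top"
    proof (intro always_eventually allI)
      fix n
      have "0 \<le> (\<Sum>k=1..<n. g k)" using assms(2) by (simp add: sum_nonneg)
      moreover have "(\<Sum>k=1..<n. g k) \<le> (\<Sum>k<n. g k)" using assms(2) by (intro sum_mono2) auto
      moreover have "(\<Sum>k<n. g k) \<le> suminf g" using sg assms(2) by (intro sum_le_suminf) auto
      ultimately show "norm (\<Sum>k=1..<n. g k) \<le> (suminf g + 1) * norm (1::real)" by simp
    qed
  qed
qed

lemma V_bigo_pow:
  fixes g :: "nat \<Rightarrow> real"
  assumes "0 < r" "r \<le> 1" "\<And>k. g k \<ge> 0" "g \<in> O(\<lambda>k. real k powr (r - 1))"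
  shows "(\<lambda>n. \<Sum>k=1..<n. g k) \<in> O(\<lambda>n. real n powr r)"
proof -
  from assms(4) obtain c where c: "c > 0" "eventually (\<lambda>k. norm (g k) \<le> c * norm (real k powr (r - 1))) at_top"
    by (elim landau_o.bigE)
  then obtain N where N: "\<And>k. k \<ge> N \<Longrightarrow> g k \<le> c * real k powr (r - 1)"
    using assms(3) by (auto simp: eventually_at_top_linorder)
  define K where "K = (\<Sum>k<N. g k)"
  have "K \<ge> 0" unfolding K_def using assms(3) by (simp add: sum_nonneg)
  have bnd: "(\<Sum>k=1..<n. g k) \<le> (K + c / r) * real n powr r" if "n \<ge> 1" for n
  proof -
    have "(\<Sum>k=1..<n. g k) \<le> (\<Sum>k=1..<n. c * real k powr (r - 1) + (if k < N then g k else 0))"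
      using N assms(3) c(1) by (intro sum_mono) (auto simp: not_less)
    also have "\<dots> = c * (\<Sum>k=1..<n. real k powr (r - 1)) + (\<Sum>k=1..<n. (if k < N then g k else 0))"
      by (simp add: sum.distrib sum_distrib_left)
    also have "(\<Sum>k=1..<n. real k powr (r - 1)) \<le> (\<Sum>k=1..n. real k powr (r - 1))"
      by (intro sum_mono2) auto
    also have "\<dots> \<le> real n powr r / r" by (rule powr_sum_bound[OF assms(1,2)])
    also have "(\<Sum>k=1..<n. (if k < N then g k else 0)) \<le> (\<Sum>k<N. g k)"
    proof -
      have "(\<Sum>k=1..<n. (if k < N then g k else 0)) = (\<Sum>k\<in>{1..<n} \<inter> {..<N}. g k)"
        by (simp add: sum.inter_restrict)
      also have "\<dots> \<le> (\<Sum>k<N. g k)" using assms(3) by (intro sum_mono2) auto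
      finally show ?thesis .
    qed
    finally have "(\<Sum>k=1..<n. g k) \<le> c * (real n powr r / r) + K"
      unfolding K_def using c by (simp add: mult_left_mono)
    moreover have "real n powr r \<ge> 1" using that assms by (simp add: ge_one_powr_ge_zero)
    ultimately have "K * 1 \<le> K * real n powr r" using \<open>K \<ge> 0\<close> by (intro mult_left_mono)
    moreover have "(K + c / r) * real n powr r = K * real n powr r + c * (real n powr r / r)"
      by (simp add: algebra_simps)
    ultimately show ?thesis using \<open>(\<Sum>k=1..<n. g k) \<le> c * (real n powr r / r) + K\<close> by linarith
  qed
  show ?thesis
  proof (rule landau_o.bigI[of "K + c / r"])
    have "c / r > 0" using c assms by simp
    thus "K + c / r > 0" using \<open>K \<ge> 0\<close> by linarith
    show "eventually (\<lambda>n. norm (\<Sum>k=1..<n. g k) \<le> (K + c / r) * norm (real n powr r)) at_top"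
      using eventually_ge_at_top[of "1::nat"]
    proof eventually_elim
      case (elim n)
      have "0 \<le> (\<Sum>k=1..<n. g k)" using assms(3) by (simp add: sum_nonneg)
      thus ?case using bnd[OF elim] by simp
    qed
  qed
qed

lemma g_bigo:
  fixes C T :: "nat \<Rightarrow> real"
  assumes "-1 \<le> q" "q < 1" "cc q \<in> O(C)"
    "(\<lambda>k. real k powr (-q) * (real k powr (2*q-1) * (1/(real k+1)))) \<in> O(T)"
    "(\<lambda>k. real k powr (-q) * (C k * (1/real k))) \<in> O(T)"
  shows "(\<lambda>k. \<bar>aa q (Suc k) - aa q k\<bar>) \<in> O(T)"
proof -
  have b: "(\<lambda>k. bb q (Suc k)) \<in> O(\<lambda>k. real k powr (-q))" by (rule bb_Suc_bigo[OF assms(1,2)])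
  have P: "PP q \<in> O(\<lambda>k. real k powr (2*q-1))"
    unfolding PP_def[abs_def] by (rule poch_fact_bigo)
  have g1: "(\<lambda>k. bb q (Suc k) * (PP q k * (1/(real k+1)))) \<in> O(T)"
    by (rule landau_o.big_trans[OF landau_o.big.mult[OF b landau_o.big.mult[OF P landau_o.big_refl]] assms(4)])
  have g2: "(\<lambda>k. q * (bb q (Suc k) * (cc q k * (1/real k)))) \<in> O(T)"
    by (rule bigo_cmult, rule landau_o.big_trans[OF landau_o.big.mult[OF b landau_o.big.mult[OF assms(3) landau_o.big_refl]] assms(5)])
  have s: "(\<lambda>k. \<bar>bb q (Suc k) * (PP q k * (1/(real k+1)))\<bar> + \<bar>q * (bb q (Suc k) * (cc q k * (1/real k)))\<bar>) \<in> O(T)"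
    by (rule sum_in_bigo(1)) (use g1 g2 in \<open>simp only: landau_o.big.abs_in_iff\<close>)+
  have "(\<lambda>k. \<bar>aa q (Suc k) - aa q k\<bar>) \<in> O(\<lambda>k. \<bar>bb q (Suc k) * (PP q k * (1/(real k+1)))\<bar> + \<bar>q * (bb q (Suc k) * (cc q k * (1/real k)))\<bar>)"
  proof (intro landau_o.big_mono)
    show "eventually (\<lambda>k. norm \<bar>aa q (Suc k) - aa q k\<bar> \<le> norm (\<bar>bb q (Suc k) * (PP q k * (1/(real k+1)))\<bar> + \<bar>q * (bb q (Suc k) * (cc q k * (1/real k)))\<bar>)) at_top"
      using eventually_ge_at_top[of "1::nat"]
    proof eventually_elim
      case (elim k)
      have e: "aa q (Suc k) - aa q k = bb q (Suc k) * (PP q k * (1/(real k+1))) - q * (bb q (Suc k) * (cc q k * (1/real k)))"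
        unfolding aa_diff[OF elim] by (simp add: algebra_simps)
      have gen: "norm \<bar>X - Y\<bar> \<le> norm (\<bar>X\<bar> + \<bar>Y\<bar>)" for X Y :: real
        by (simp add: abs_triangle_ineq4)
      show ?case unfolding e by (rule gen)
    qed
  qed
  thus ?thesis using s by (rule landau_o.big_trans)
qed

lemma PP_zero: "k \<ge> 1 \<Longrightarrow> PP 0 k = 0"
  by (simp add: PP_def pochhammer_0_left)

lemma cc_bigo_small:
  assumes "q < 1/2" shows "cc q \<in> O(\<lambda>_. 1)"
proof -
  have e: "eventually (\<lambda>k. (1/(2*q-1)) * (PP q k - 1) = cc q k) at_top"
    using eventually_ge_at_top[of "1::nat"] by eventually_elim (use assms in \<open>simp add: cc_alt\<close>)
  have P: "PP q \<in> O(\<lambda>k. real k powr (2*q-1))"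
    unfolding PP_def[abs_def] by (rule poch_fact_bigo)
  also have "(\<lambda>k. real k powr (2*q-1)) \<in> O(\<lambda>_. 1)" using assms by real_asymp
  finally have "(\<lambda>k. PP q k - 1) \<in> O(\<lambda>_. 1)" by (intro sum_in_bigo) simp_all
  hence "(\<lambda>k. (1/(2*q-1)) * (PP q k - 1)) \<in> O(\<lambda>_. 1)" by (rule bigo_cmult)
  thus ?thesis using landau_o.big.in_cong[OF e] by simp
qed

lemma cc_bigo_large:
  assumes "q > 1/2" shows "cc q \<in> O(\<lambda>k. real k powr (2*q-1))"
proof -
  have e: "eventually (\<lambda>k. (1/(2*q-1)) * (PP q k - 1) = cc q k) at_top"
    using eventually_ge_at_top[of "1::nat"] by eventually_elim (use assms in \<open>simp add: cc_alt\<close>)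
  have P: "PP q \<in> O(\<lambda>k. real k powr (2*q-1))"
    unfolding PP_def[abs_def] by (rule poch_fact_bigo)
  have "(\<lambda>_. 1) \<in> O(\<lambda>k. real k powr (2*q-1))" using assms by real_asymp
  with P have "(\<lambda>k. PP q k - 1) \<in> O(\<lambda>k. real k powr (2*q-1))" by (intro sum_in_bigo)
  hence "(\<lambda>k. (1/(2*q-1)) * (PP q k - 1)) \<in> O(\<lambda>k. real k powr (2*q-1))" by (rule bigo_cmult)
  thus ?thesis using landau_o.big.in_cong[OF e] by simp
qed

lemma cc_bigo_half: "cc (1/2) \<in> O(\<lambda>k. ln (real k))"
proof -
  have e: "eventually (\<lambda>k. (harm k - ln (real k)) + ln (real k) = cc (1/2) k) at_top"
    using eventually_ge_at_top[of "1::nat"] by eventually_elim (simp add: cc_half)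
  have "(\<lambda>k. harm k - ln (real k)) \<in> O(\<lambda>_. 1)"
    using euler_mascheroni_LIMSEQ by (rule convergent_bigo1)
  also have "(\<lambda>_. 1) \<in> O(\<lambda>k. ln (real k))" by real_asymp
  finally have h1: "(\<lambda>k. harm k - ln (real k)) \<in> O(\<lambda>k. ln (real k))" .
  have "(\<lambda>k. (harm k - ln (real k)) + ln (real k)) \<in> O(\<lambda>k. ln (real k))"
    by (rule sum_in_bigo(1)[OF h1 landau_o.big_refl])
  thus ?thesis using landau_o.big.in_cong[OF e] by blast
qed

definition SS :: "real \<Rightarrow> nat \<Rightarrow> real" where
  "SS q n = (\<Sum>k=1..n. (-1)^(n-k) * aa q k)"

definition VV :: "real \<Rightarrow> nat \<Rightarrow> real" where
  "VV q n = (\<Sum>k=1..<n. \<bar>aa q (Suc k) - aa q k\<bar>)"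

lemma T2_eq: "T2 n q = integral {0..1} (\<lambda>u. u powr (real n + q) * (1 - u) powr (- q) / (1 + u)) * SS q n"
  unfolding T2_def SS_def aa_def by (simp add: mult.assoc)

lemma SS_bigo:
  fixes F :: "nat \<Rightarrow> real"
  assumes "VV q \<in> O(F)" "(\<lambda>_. 1) \<in> O(F)"
  shows "SS q \<in> O(F)"
proof -
  have "(\<lambda>n. \<bar>aa q 1\<bar> * 1 + VV q n) \<in> O(F)"
    by (intro sum_in_bigo(1) bigo_cmult assms)
  moreover have "SS q \<in> O(\<lambda>n. \<bar>aa q 1\<bar> * 1 + VV q n)"
  proof (intro landau_o.big_mono always_eventually allI)
    fix n
    have "VV q n \<ge> 0" unfolding VV_def by (simp add: sum_nonneg)
    moreover have "\<bar>SS q n\<bar> \<le> \<bar>aa q 1\<bar> + VV q n"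
      unfolding SS_def VV_def by (rule alt_sum_bound)
    ultimately show "norm (SS q n) \<le> norm (\<bar>aa q 1\<bar> * 1 + VV q n)" by simp
  qed
  ultimately show ?thesis using landau_o.big_trans by blast
qed

lemma VV_neg:
  assumes "-1 \<le> q" "q < 0"
  shows "VV q \<in> O(\<lambda>n. real n powr (-q))"
proof -
  have c: "cc q \<in> O(\<lambda>_. 1)" using assms by (intro cc_bigo_small) simp
  have "(\<lambda>k. \<bar>aa q (Suc k) - aa q k\<bar>) \<in> O(\<lambda>k. real k powr (- q - 1))"
  proof (rule g_bigo[OF assms(1) _ c])
    show "q < 1" using assms by simp
    show "(\<lambda>k. real k powr (-q) * (real k powr (2*q-1) * (1/(real k+1)))) \<in> O(\<lambda>k. real k powr (- q - 1))"
      using assms by real_asymp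
    show "(\<lambda>k. real k powr (-q) * (1 * (1/real k))) \<in> O(\<lambda>k. real k powr (- q - 1))"
      using assms by real_asymp
  qed
  thus ?thesis unfolding VV_def[abs_def] using assms by (intro V_bigo_pow) auto
qed

lemma VV_zero: "VV 0 n = 0"
  unfolding VV_def by (intro sum.neutral) (auto simp: aa_diff PP_zero)

lemma VV_zero': "VV 0 = (\<lambda>_. 0)" by (rule ext) (rule VV_zero)

lemma VV_pos:
  assumes "0 < q" "q < 1"
  shows "VV q \<in> O(\<lambda>_. 1)"
proof -
  have m: "-1 \<le> q" using assms by simp
  obtain C :: "nat \<Rightarrow> real" and e :: real where Ce: "e > 0" "cc q \<in> O(C)"
    "(\<lambda>k. real k powr (-q) * (real k powr (2*q-1) * (1/(real k+1)))) \<in> O(\<lambda>k. real k powr (-1 - e))"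
    "(\<lambda>k. real k powr (-q) * (C k * (1/real k))) \<in> O(\<lambda>k. real k powr (-1 - e))"
  proof (cases "q < 1/2")
    case True
    show ?thesis
    proof (rule that[of "q/2" "\<lambda>_. 1"])
      show "cc q \<in> O(\<lambda>_. 1)" using True by (rule cc_bigo_small)
      show "(\<lambda>k. real k powr (-q) * (real k powr (2*q-1) * (1/(real k+1)))) \<in> O(\<lambda>k. real k powr (-1 - q/2))"
        using assms True by real_asymp
      show "(\<lambda>k. real k powr (-q) * (1 * (1/real k))) \<in> O(\<lambda>k. real k powr (-1 - q/2))"
        using assms True by real_asymp
    qed (use assms in simp)
  next
    case False
    show ?thesis
    proof (cases "q = 1/2")
      case True
      show ?thesis
      proof (rule that[of "1/4" "\<lambda>k. ln (real k)"])
        show "cc q \<in> O(\<lambda>k. ln (real k))" unfolding True by (rule cc_bigo_half)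
        show "(\<lambda>k. real k powr (-q) * (real k powr (2*q-1) * (1/(real k+1)))) \<in> O(\<lambda>k. real k powr (-1 - 1/4))"
          unfolding True by real_asymp
        show "(\<lambda>k. real k powr (-q) * (ln (real k) * (1/real k))) \<in> O(\<lambda>k. real k powr (-1 - 1/4))"
          unfolding True by real_asymp
      qed simp
    next
      case False2: False
      hence q2: "q > 1/2" using False by simp
      show ?thesis
      proof (rule that[of "1 - q" "\<lambda>k. real k powr (2*q-1)"])
        show "cc q \<in> O(\<lambda>k. real k powr (2*q-1))" using q2 by (rule cc_bigo_large)
        show "(\<lambda>k. real k powr (-q) * (real k powr (2*q-1) * (1/(real k+1)))) \<in> O(\<lambda>k. real k powr (-1 - (1 - q)))"
          using assms q2 by real_asymp
        show "(\<lambda>k. real k powr (-q) * (real k powr (2*q-1) * (1/real k))) \<in> O(\<lambda>k. real k powr (-1 - (1 - q)))"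
          using assms q2 by real_asymp
      qed (use assms in simp)
    qed
  qed
  have "(\<lambda>k. \<bar>aa q (Suc k) - aa q k\<bar>) \<in> O(\<lambda>k. real k powr (-1 - e))"
    by (rule g_bigo[OF m assms(2) Ce(2-4)])
  thus ?thesis unfolding VV_def[abs_def] using Ce(1) by (intro V_bigo_1) auto
qed

theorem lemma3p7:
  fixes q :: real
  assumes "-1 \<le> q" and "q < 1"
  shows "(q < 0 \<longrightarrow> (\<lambda>n. \<bar>T2 n q\<bar>) \<in> O(\<lambda>n. 1 / real n))
       \<and> (q = 0 \<longrightarrow> (\<lambda>n. \<bar>T2 n q\<bar>) \<in> O(\<lambda>n. ln (real n) / real n))
       \<and> (0 < q \<longrightarrow> (\<lambda>n. \<bar>T2 n q\<bar>) \<in> O(\<lambda>n. real n powr (q - 1)))"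
proof (intro conjI impI)
  have J: "(\<lambda>n. integral {0..1} (\<lambda>u. u powr (real n + q) * (1 - u) powr (- q) / (1 + u)))
           \<in> O(\<lambda>n. real n powr (q - 1))" by (rule J_bigo[OF assms])
  have T2f: "(\<lambda>n. T2 n q) = (\<lambda>n. integral {0..1} (\<lambda>u. u powr (real n + q) * (1 - u) powr (- q) / (1 + u)) * SS q n)"
    by (simp add: T2_eq)
  {
    assume q: "q < 0"
    have S: "SS q \<in> O(\<lambda>n. real n powr (-q))"
      by (rule SS_bigo[OF VV_neg[OF assms(1) q]]) (use q in real_asymp)
    have "(\<lambda>n. T2 n q) \<in> O(\<lambda>n. real n powr (q - 1) * real n powr (-q))"
      unfolding T2f by (rule landau_o.big.mult[OF J S])
    also have "(\<lambda>n. real n powr (q - 1) * real n powr (-q)) \<in> O(\<lambda>n. 1 / real n)" by real_asymp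
    finally show "(\<lambda>n. \<bar>T2 n q\<bar>) \<in> O(\<lambda>n. 1 / real n)" by simp
  }
  {
    assume q: "q = 0"
    have S: "SS q \<in> O(\<lambda>_. 1)"
      by (rule SS_bigo) (simp_all add: q VV_zero')
    have "(\<lambda>n. T2 n q) \<in> O(\<lambda>n. real n powr (q - 1) * 1)"
      unfolding T2f by (rule landau_o.big.mult[OF J S])
    also have "(\<lambda>n. real n powr (q - 1) * 1) \<in> O(\<lambda>n. ln (real n) / real n)" unfolding q by real_asymp
    finally show "(\<lambda>n. \<bar>T2 n q\<bar>) \<in> O(\<lambda>n. ln (real n) / real n)" by simp
  }
  {
    assume q: "0 < q"
    have S: "SS q \<in> O(\<lambda>_. 1)"
      by (rule SS_bigo[OF VV_pos[OF q assms(2)]]) simp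
    have "(\<lambda>n. T2 n q) \<in> O(\<lambda>n. real n powr (q - 1) * 1)"
      unfolding T2f by (rule landau_o.big.mult[OF J S])
    thus "(\<lambda>n. \<bar>T2 n q\<bar>) \<in> O(\<lambda>n. real n powr (q - 1))" by simp
  }
qed

end
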